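(* Consider the dissemination stage described in the context on a connected non-bipartite graph, with $N$ large enough that $g(N)>\ln N$. If each agent sets off $hg(N)$ MHRW tokens, then with probability at least $1-\frac{1}{N^{h/3}}$ all these walks complete their $L$ steps, and hence reach the $\frac1{N^3}$-nearly uniform distribution $[\frac1N-\frac1{N^3},\frac1N+\frac1{N^3}]$ over agents, within $O(\log^2N)$ slots.
   Context: $\mathcal G=(\mathcal N,\mathcal E)$ is a connected, non-bipartite undirected graph on agents $\mathcal N=\{1,\dots,N\}$; $\mathcal N_i$ is the neighbor set of $i$, $N_i=|\mathcal N_i|$. The function $g:\mathbb N^+\to\mathbb R$ satisfies: for every real $\ell>0$, $g(N)>\ell\ln N$ and $g(N)<\ell N$ for all sufficiently large $N$. Let $\beta\in(1/2,1)$, $\sigma\ge11$, $h=16\sigma/(1-\beta)$. Metropolis–Hastings random walk (MHRW): from $i$ move to $i'\in\mathcal N_i$ with probability $\Psi(i,i')=\min\{1/N_i,1/N_{i'}\}$ and stay at $i$ with probability $1-\sum_{k\in\mathcal N_i}\Psi(i,k)$. The walk length $L=O(\log N)$ is chosen so that from any start the position after $L$ steps is at each agent with probability in $[\frac1N-\frac1{N^3},\frac1N+\frac1{N^3}]$. Time is slotted and synchronous. Dissemination: each agent launches $hg(N)$ independent tokens, each to be forwarded $L$ times; each agent stores received tokens with positive remaining length in a FIFO queue and in every slot pops up to $hg(N)$ of them, decrements their remaining length, and forwards each to a node chosen according to $\Psi(i,\cdot)$. *)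

theory Defs
  imports "HOL-Probability.Probability"
begin

definition agents :: "nat \<Rightarrow> nat set" where
  "agents N = {1..N}"

definition simple_graph :: "nat \<Rightarrow> (nat \<Rightarrow> nat \<Rightarrow> bool) \<Rightarrow> bool" where
  "simple_graph N E \<longleftrightarrow>
     (\<forall>u v. E u v \<longrightarrow> u \<in> agents N \<and> v \<in> agents N) \<and>
     (\<forall>u v. E u v \<longrightarrow> E v u) \<and> (\<forall>u. \<not> E u u)"

definition connected_graph :: "nat \<Rightarrow> (nat \<Rightarrow> nat \<Rightarrow> bool) \<Rightarrow> bool" where
  "connected_graph N E \<longleftrightarrow> (\<forall>u\<in>agents N. \<forall>v\<in>agents N. E\<^sup>*\<^sup>* u v)"

definition bipartite_graph :: "nat \<Rightarrow> (nat \<Rightarrow> nat \<Rightarrow> bool) \<Rightarrow> bool" where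
  "bipartite_graph N E \<longleftrightarrow>
     (\<exists>c :: nat \<Rightarrow> bool. \<forall>u\<in>agents N. \<forall>v\<in>agents N. E u v \<longrightarrow> c u \<noteq> c v)"

definition nbrs :: "nat \<Rightarrow> (nat \<Rightarrow> nat \<Rightarrow> bool) \<Rightarrow> nat \<Rightarrow> nat set" where
  "nbrs N E i = {j \<in> agents N. E i j}"

definition Psi :: "nat \<Rightarrow> (nat \<Rightarrow> nat \<Rightarrow> bool) \<Rightarrow> nat \<Rightarrow> nat \<Rightarrow> real" where
  "Psi N E i j =
     (if j \<in> nbrs N E i then min (1 / real (card (nbrs N E i))) (1 / real (card (nbrs N E j)))
      else if j = i then 1 - (\<Sum>k\<in>nbrs N E i. min (1 / real (card (nbrs N E i))) (1 / real (card (nbrs N E k))))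
      else 0)"

definition mhrw_step :: "nat \<Rightarrow> (nat \<Rightarrow> nat \<Rightarrow> bool) \<Rightarrow> nat \<Rightarrow> nat pmf" where
  "mhrw_step N E i = embed_pmf (Psi N E i)"

fun mhrw_walk :: "nat \<Rightarrow> (nat \<Rightarrow> nat \<Rightarrow> bool) \<Rightarrow> nat \<Rightarrow> nat \<Rightarrow> nat pmf" where
  "mhrw_walk N E i 0 = return_pmf i"
| "mhrw_walk N E i (Suc n) = bind_pmf (mhrw_walk N E i n) (mhrw_step N E)"

definition nearly_uniform_length :: "nat \<Rightarrow> (nat \<Rightarrow> nat \<Rightarrow> bool) \<Rightarrow> nat \<Rightarrow> bool" where
  "nearly_uniform_length N E L \<longleftrightarrow>
     (\<forall>i\<in>agents N. \<forall>j\<in>agents N.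
        1 / real N - 1 / real N ^ 3 \<le> pmf (mhrw_walk N E i L) j \<and>
        pmf (mhrw_walk N E i L) j \<le> 1 / real N + 1 / real N ^ 3)"

text \<open>Dissemination state: for every agent its FIFO queue, holding the remaining
  lengths of the stored tokens (head = first to be popped).\<close>
type_synonym dstate = "nat \<Rightarrow> nat list"

definition dissem_init :: "nat \<Rightarrow> nat \<Rightarrow> nat \<Rightarrow> dstate" where
  "dissem_init N k L = (\<lambda>i. if i \<in> agents N then filter (\<lambda>r. 0 < r) (replicate k L) else [])"

definition popped_idx :: "nat \<Rightarrow> nat \<Rightarrow> dstate \<Rightarrow> (nat \<times> nat) set" where
  "popped_idx N k Q = {(i, j). i \<in> agents N \<and> j < length (take k (Q i))}"

definition dissem_update :: "nat \<Rightarrow> nat \<Rightarrow> dstate \<Rightarrow> (nat \<times> nat \<Rightarrow> nat) \<Rightarrow> dstate" where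
  "dissem_update N k Q d = (\<lambda>v.
     if v \<in> agents N then
       drop k (Q v) @
       concat (map (\<lambda>i. [take k (Q i) ! j - 1. j \<leftarrow> [0..<length (take k (Q i))],
                                d (i, j) = v \<and> 1 < take k (Q i) ! j]) [1..<Suc N])
     else [])"

definition dissem_step :: "nat \<Rightarrow> (nat \<Rightarrow> nat \<Rightarrow> bool) \<Rightarrow> nat \<Rightarrow> dstate \<Rightarrow> dstate pmf" where
  "dissem_step N E k Q =
     map_pmf (dissem_update N k Q)
       (Pi_pmf (popped_idx N k Q) 0 (\<lambda>(i, j). mhrw_step N E i))"

text \<open>Distribution of the state after t slots, k = tokens launched / popped per slot.\<close>
fun dissem :: "nat \<Rightarrow> (nat \<Rightarrow> nat \<Rightarrow> bool) \<Rightarrow> nat \<Rightarrow> nat \<Rightarrow> nat \<Rightarrow> dstate pmf" where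
  "dissem N E k L 0 = return_pmf (dissem_init N k L)"
| "dissem N E k L (Suc t) = bind_pmf (dissem N E k L t) (dissem_step N E k)"

definition all_walks_done :: "nat \<Rightarrow> dstate set" where
  "all_walks_done N = {Q. \<forall>i\<in>agents N. Q i = []}"

end

theory Submission
  imports Defs
begin

lemma nbrs_sub: "nbrs N E i \<subseteq> agents N"
  by (auto simp: nbrs_def)

lemma finite_agents[simp]: "finite (agents N)"
  by (simp add: agents_def)

lemma finite_nbrs[simp]: "finite (nbrs N E i)"
  using finite_subset[OF nbrs_sub] by simp

lemma Psi_self_nonneg:
  "0 \<le> 1 - (\<Sum>k\<in>nbrs N E i. min (1 / real (card (nbrs N E i))) (1 / real (card (nbrs N E k))))"
proof -
  have "(\<Sum>k\<in>nbrs N E i. min (1 / real (card (nbrs N E i))) (1 / real (card (nbrs N E k))))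
        \<le> (\<Sum>k\<in>nbrs N E i. 1 / real (card (nbrs N E i)))"
    by (intro sum_mono) auto
  also have "\<dots> \<le> 1"
    by (cases "card (nbrs N E i) = 0") auto
  finally show ?thesis by simp
qed

lemma Psi_nonneg: "0 \<le> Psi N E i j"
  using Psi_self_nonneg[of N E i] by (auto simp: Psi_def)

lemma Psi_outside:
  assumes "simple_graph N E" "i \<in> agents N" "j \<notin> agents N"
  shows "Psi N E i j = 0"
  using assms by (auto simp: Psi_def nbrs_def)

lemma i_notin_nbrs:
  assumes "simple_graph N E" shows "i \<notin> nbrs N E i"
  using assms by (auto simp: simple_graph_def nbrs_def)

lemma Psi_rowsum:
  assumes G: "simple_graph N E" and i: "i \<in> agents N"
  shows "(\<Sum>j\<in>agents N. Psi N E i j) = 1"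
proof -
  let ?S = "nbrs N E i"
  have fin: "finite (agents N)" by simp
  have split: "agents N = ?S \<union> ({i} \<union> (agents N - ?S - {i}))"
    using nbrs_sub[of N E i] i by auto
  have d1: "?S \<inter> ({i} \<union> (agents N - ?S - {i})) = {}"
    using i_notin_nbrs[OF G, of i] by auto
  have "(\<Sum>j\<in>agents N. Psi N E i j) =
        (\<Sum>j\<in>?S. Psi N E i j) + (\<Sum>j\<in>{i} \<union> (agents N - ?S - {i}). Psi N E i j)"
    by (subst split, rule sum.union_disjoint) (use d1 in auto)
  also have "(\<Sum>j\<in>{i} \<union> (agents N - ?S - {i}). Psi N E i j) =
      Psi N E i i + (\<Sum>j\<in>agents N - ?S - {i}. Psi N E i j)"
    by (subst sum.union_disjoint) auto
  also have "(\<Sum>j\<in>agents N - ?S - {i}. Psi N E i j) = 0"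
    by (rule sum.neutral) (auto simp: Psi_def)
  also have "(\<Sum>j\<in>?S. Psi N E i j) =
      (\<Sum>k\<in>?S. min (1 / real (card ?S)) (1 / real (card (nbrs N E k))))"
    by (rule sum.cong) (auto simp: Psi_def)
  also have "Psi N E i i = 1 - (\<Sum>k\<in>?S. min (1 / real (card ?S)) (1 / real (card (nbrs N E k))))"
    using i_notin_nbrs[OF G, of i] by (simp add: Psi_def)
  finally show ?thesis by simp
qed

lemma Psi_sym:
  assumes G: "simple_graph N E"
  shows "Psi N E i j = Psi N E j i"
proof (cases "i = j")
  case False
  have "j \<in> nbrs N E i \<longleftrightarrow> i \<in> nbrs N E j"
    using G by (auto simp: simple_graph_def nbrs_def)
  then show ?thesis using False by (auto simp: Psi_def min.commute)
qed simp

lemma Psi_colsum: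
  assumes G: "simple_graph N E" and v: "v \<in> agents N"
  shows "(\<Sum>i\<in>agents N. Psi N E i v) = 1"
  using Psi_rowsum[OF G v] Psi_sym[OF G] by simp

lemma pmf_mhrw_step:
  assumes G: "simple_graph N E" and i: "i \<in> agents N"
  shows "pmf (mhrw_step N E i) y = Psi N E i y"
proof -
  have "(\<integral>\<^sup>+x. ennreal (Psi N E i x) \<partial>count_space UNIV) = (\<Sum>x\<in>agents N. ennreal (Psi N E i x))"
    by (rule nn_integral_count_space') (use Psi_outside[OF G i] in auto)
  also have "\<dots> = ennreal (\<Sum>x\<in>agents N. Psi N E i x)"
    by (rule sum_ennreal) (simp add: Psi_nonneg)
  also have "\<dots> = 1" using Psi_rowsum[OF G i] by simp
  finally have 1: "(\<integral>\<^sup>+x. ennreal (Psi N E i x) \<partial>count_space UNIV) = 1" .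
  show ?thesis unfolding mhrw_step_def
    by (rule pmf_embed_pmf) (auto simp: Psi_nonneg 1)
qed


definition rv :: "nat \<Rightarrow> dstate \<Rightarrow> nat \<times> nat \<Rightarrow> nat" where
  "rv k Q x = take k (Q (fst x)) ! snd x"

definition cnt :: "nat \<Rightarrow> nat \<Rightarrow> dstate \<Rightarrow> (nat \<times> nat \<Rightarrow> nat) \<Rightarrow> nat \<Rightarrow> nat" where
  "cnt N k Q d v = (\<Sum>x\<in>popped_idx N k Q. if d x = v \<and> 1 < rv k Q x then 1 else 0)"

lemma len_compr: "length [f j. j \<leftarrow> xs, P j] = length (filter P xs)"
  by (induct xs) auto

lemma finite_popped[simp]: "finite (popped_idx N k Q)"
proof -
  have "popped_idx N k Q \<subseteq> agents N \<times> {..<k}" by (auto simp: popped_idx_def)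
  then show ?thesis by (rule finite_subset) auto
qed

lemma popped_Sigma: "popped_idx N k Q = Sigma (agents N) (\<lambda>i. {..<length (take k (Q i))})"
  by (auto simp: popped_idx_def)

lemma length_update:
  assumes v: "v \<in> agents N"
  shows "length (dissem_update N k Q d v) = (length (Q v) - k) + cnt N k Q d v"
proof -
  define P where "P i j \<longleftrightarrow> d (i, j) = v \<and> 1 < take k (Q i) ! j" for i j
  have li: "length [take k (Q i) ! j - 1. j \<leftarrow> [0..<length (take k (Q i))], d (i, j) = v \<and> 1 < take k (Q i) ! j]
        = (\<Sum>j\<in>{..<length (take k (Q i))}. if P i j then 1 else 0)" for i
  proof -
    have "length [take k (Q i) ! j - 1. j \<leftarrow> [0..<length (take k (Q i))], d (i, j) = v \<and> 1 < take k (Q i) ! j]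
        = length (filter (P i) [0..<length (take k (Q i))])"
      unfolding len_compr P_def by simp
    also have "\<dots> = card {j. j < length (take k (Q i)) \<and> P i j}"
      by (simp add: length_filter_conv_card) (metis (lifting) add_0 min_less_iff_conj nth_upt)
    also have "{j. j < length (take k (Q i)) \<and> P i j} = {j\<in>{..<length (take k (Q i))}. P i j}" by auto
    also have "card \<dots> = (\<Sum>j\<in>{..<length (take k (Q i))}. if P i j then 1 else 0)"
      by (simp add: sum.inter_filter[symmetric])
    finally show ?thesis .
  qed
  have "length (concat (map (\<lambda>i. [take k (Q i) ! j - 1. j \<leftarrow> [0..<length (take k (Q i))],
                                d (i, j) = v \<and> 1 < take k (Q i) ! j]) [1..<Suc N]))
        = (\<Sum>i\<in>agents N. \<Sum>j\<in>{..<length (take k (Q i))}. if P i j then 1 else 0)"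
    unfolding length_concat map_map
    apply (subst sum_list_distinct_conv_sum_set, simp)
    apply (rule sum.cong)
     apply (force simp: agents_def)
    apply (simp only: o_def li P_def)
    done
  also have "\<dots> = (\<Sum>x\<in>popped_idx N k Q. if d x = v \<and> 1 < rv k Q x then 1 else 0)"
    unfolding popped_Sigma by (subst sum.Sigma) (auto simp: P_def rv_def split_def)
  finally show ?thesis using v by (simp add: dissem_update_def cnt_def)
qed


lemma prod_mono_ennreal:
  fixes f g :: "'a \<Rightarrow> ennreal"
  assumes "\<And>x. x \<in> A \<Longrightarrow> f x \<le> g x"
  shows "prod f A \<le> prod g A"
  using assms
proof (induction A rule: infinite_finite_induct)
  case (insert x F)
  then show ?case by (simp add: mult_mono)
qed auto

lemma factor_bound:
  assumes G: "simple_graph N E" and i: "i \<in> agents N" and l: "0 \<le> l"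
  shows "(\<integral>\<^sup>+y. ennreal (exp (l * (if y = v \<and> c then 1 else 0))) \<partial>measure_pmf (mhrw_step N E i))
         \<le> ennreal (exp ((exp l - 1) * Psi N E i v))"
proof -
  have el: "0 \<le> exp l - 1" using l by simp
  have "(\<integral>\<^sup>+y. ennreal (exp (l * (if y = v \<and> c then 1 else 0))) \<partial>measure_pmf (mhrw_step N E i))
      \<le> (\<integral>\<^sup>+y. (1 + ennreal (exp l - 1) * indicator {v} y) \<partial>measure_pmf (mhrw_step N E i))"
  proof (rule nn_integral_mono)
    fix y
    show "ennreal (exp (l * (if y = v \<and> c then 1 else 0))) \<le> 1 + ennreal (exp l - 1) * indicator {v} y"
    proof -
      have e: "1 + ennreal (exp l - 1) = ennreal (exp l)"
        using ennreal_plus[of 1 "exp l - 1"] el by simp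
      show ?thesis using e by (auto simp: indicator_def)
    qed
  qed
  also have "\<dots> = 1 + ennreal (exp l - 1) * emeasure (measure_pmf (mhrw_step N E i)) {v}"
    by (subst nn_integral_add) (auto simp: nn_integral_cmult_indicator)
  also have "\<dots> = ennreal (1 + (exp l - 1) * Psi N E i v)"
    using ennreal_plus[of 1 "(exp l - 1) * Psi N E i v"] el Psi_nonneg[of N E i v]
    by (simp add: emeasure_pmf_single pmf_mhrw_step[OF G i] ennreal_mult)
  also have "\<dots> \<le> ennreal (exp ((exp l - 1) * Psi N E i v))"
    by (intro ennreal_leI) (metis add.commute exp_ge_add_one_self)
  finally show ?thesis .
qed

lemma popped_psi_sum:
  assumes G: "simple_graph N E" and v: "v \<in> agents N"
  shows "(\<Sum>x\<in>popped_idx N k Q. Psi N E (fst x) v) \<le> real k"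
proof -
  have "(\<Sum>x\<in>popped_idx N k Q. Psi N E (fst x) v)
      = (\<Sum>i\<in>agents N. \<Sum>j\<in>{..<length (take k (Q i))}. Psi N E i v)"
    unfolding popped_Sigma by (subst sum.Sigma) (auto simp: split_def)
  also have "\<dots> = (\<Sum>i\<in>agents N. real (length (take k (Q i))) * Psi N E i v)" by simp
  also have "\<dots> \<le> (\<Sum>i\<in>agents N. real k * Psi N E i v)"
    by (intro sum_mono mult_right_mono) (auto simp: Psi_nonneg)
  also have "\<dots> = real k" using Psi_colsum[OF G v] by (simp add: sum_distrib_left[symmetric])
  finally show ?thesis .
qed

lemma step_mgf:
  assumes G: "simple_graph N E" and v: "v \<in> agents N" and l: "0 \<le> l"
  shows "(\<integral>\<^sup>+Q'. ennreal (exp (l * real (length (Q' v)))) \<partial>measure_pmf (dissem_step N E k Q))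
       \<le> ennreal (exp (l * real (length (Q v) - k)) * exp ((exp l - 1) * real k))"
proof -
  let ?P = "popped_idx N k Q"
  let ?M = "\<lambda>x. case x of (i, j) \<Rightarrow> mhrw_step N E i"
  define f where "f x y = ennreal (exp (l * (if y = v \<and> 1 < rv k Q x then 1 else 0)))" for x y
  have eq: "ennreal (exp (l * real (length (dissem_update N k Q d v))))
      = ennreal (exp (l * real (length (Q v) - k))) * (\<Prod>x\<in>?P. f x (d x))" for d
  proof -
    have "real (cnt N k Q d v) = (\<Sum>x\<in>?P. (if d x = v \<and> 1 < rv k Q x then 1 else 0))"
      unfolding cnt_def by (simp add: of_nat_sum if_distrib cong: if_cong)
    then have "exp (l * real (length (dissem_update N k Q d v)))
       = exp (l * real (length (Q v) - k)) * (\<Prod>x\<in>?P. exp (l * (if d x = v \<and> 1 < rv k Q x then 1 else 0)))"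
      by (simp add: length_update[OF v] distrib_left sum_distrib_left exp_add exp_sum)
    then show ?thesis
      unfolding f_def by (subst prod_ennreal) (auto simp: ennreal_mult prod_nonneg)
  qed
  have "(\<integral>\<^sup>+Q'. ennreal (exp (l * real (length (Q' v)))) \<partial>measure_pmf (dissem_step N E k Q))
      = (\<integral>\<^sup>+d. ennreal (exp (l * real (length (Q v) - k))) * (\<Prod>x\<in>?P. f x (d x)) \<partial>measure_pmf (Pi_pmf ?P 0 ?M))"
    unfolding dissem_step_def by (simp add: eq)
  also have "\<dots> = ennreal (exp (l * real (length (Q v) - k))) * (\<Prod>x\<in>?P. \<integral>\<^sup>+y. f x y \<partial>measure_pmf (?M x))"
    by (subst nn_integral_cmult) (simp_all add: nn_integral_prod_Pi_pmf)
  also have "\<dots> \<le> ennreal (exp (l * real (length (Q v) - k))) * (\<Prod>x\<in>?P. ennreal (exp ((exp l - 1) * Psi N E (fst x) v)))"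
  proof (intro mult_left_mono prod_mono_ennreal)
    fix x assume x: "x \<in> ?P"
    then have i: "fst x \<in> agents N" by (auto simp: popped_idx_def)
    show "(\<integral>\<^sup>+y. f x y \<partial>measure_pmf (?M x)) \<le> ennreal (exp ((exp l - 1) * Psi N E (fst x) v))"
      using factor_bound[OF G i l, of v "1 < rv k Q x"] by (simp add: f_def split_def)
  qed simp
  also have "\<dots> = ennreal (exp (l * real (length (Q v) - k)) * exp ((exp l - 1) * (\<Sum>x\<in>?P. Psi N E (fst x) v)))"
    by (subst prod_ennreal) (auto simp: ennreal_mult prod_nonneg exp_sum sum_distrib_left)
  also have "\<dots> \<le> ennreal (exp (l * real (length (Q v) - k)) * exp ((exp l - 1) * real k))"
    using popped_psi_sum[OF G v, of k Q] l
    by (intro ennreal_leI mult_left_mono) (auto intro: mult_left_mono)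
  finally show ?thesis .
qed


lemma init_len: "length (dissem_init N k L v) \<le> k"
  by (auto simp: dissem_init_def intro: order.trans[OF length_filter_le])

lemma exp_sub_nat: "exp (l * real (n - k)) \<le> exp (l * real n) * exp (- l * real k) + 1"
proof (cases "k \<le> n")
  case True
  then have "exp (l * real (n - k)) = exp (l * real n + (- l * real k))" by (simp add: of_nat_diff algebra_simps)
  also have "\<dots> = exp (l * real n) * exp (- l * real k)" by (simp only: exp_add)
  finally show ?thesis by simp
next
  case False
  then show ?thesis by (simp add: add_increasing)
qed

lemma mgf_dissem:
  assumes G: "simple_graph N E" and v: "v \<in> agents N" and l: "0 \<le> l"
  shows "(\<integral>\<^sup>+Q. ennreal (exp (l * real (length (Q v)))) \<partial>measure_pmf (dissem N E k L t))
     \<le> ennreal ((1 + real t) * exp ((exp l - 1 - l) * real k) ^ (t + 1) * exp (l * real k))"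
proof (induction t)
  define \<rho> where "\<rho> = exp ((exp l - 1 - l) * real k)"
  have \<rho>1: "1 \<le> \<rho>" unfolding \<rho>_def
  proof -
    have "0 \<le> (exp l - 1 - l) * real k" using exp_ge_add_one_self[of l] by (intro mult_nonneg_nonneg) (linarith, simp)
    then show "1 \<le> exp ((exp l - 1 - l) * real k)" by simp
  qed
  case 0
  have "exp (l * real (length (dissem_init N k L v))) \<le> exp (l * real k)"
    using init_len[of N k L v] l by (simp add: mult_left_mono)
  also have "\<dots> \<le> \<rho> * exp (l * real k)" using \<rho>1 by simp
  finally show ?case by (simp add: \<rho>_def ennreal_leI)
next
  define \<rho> where "\<rho> = exp ((exp l - 1 - l) * real k)"
  define c where "c = exp ((exp l - 1) * real k)"
  have \<rho>1: "1 \<le> \<rho>" unfolding \<rho>_def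
  proof -
    have "0 \<le> (exp l - 1 - l) * real k" using exp_ge_add_one_self[of l] by (intro mult_nonneg_nonneg) (linarith, simp)
    then show "1 \<le> exp ((exp l - 1 - l) * real k)" by simp
  qed
  have \<rho>c: "exp (- l * real k) * c = \<rho>"
    unfolding \<rho>_def c_def by (simp add: exp_add[symmetric] algebra_simps)
  have c\<rho>: "c = \<rho> * exp (l * real k)"
    unfolding \<rho>_def c_def by (simp add: exp_add[symmetric] algebra_simps)
  case (Suc t)
  let ?a = "\<integral>\<^sup>+Q. ennreal (exp (l * real (length (Q v)))) \<partial>measure_pmf (dissem N E k L t)"
  let ?X = "(1 + real t) * \<rho> ^ (t + 1) * exp (l * real k)"
  have X0: "0 \<le> ?X" using \<rho>1 by (intro mult_nonneg_nonneg) auto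
  have "(\<integral>\<^sup>+Q. ennreal (exp (l * real (length (Q v)))) \<partial>measure_pmf (dissem N E k L (Suc t)))
      = (\<integral>\<^sup>+Q. (\<integral>\<^sup>+Q'. ennreal (exp (l * real (length (Q' v)))) \<partial>measure_pmf (dissem_step N E k Q)) \<partial>measure_pmf (dissem N E k L t))"
    by simp
  also have "\<dots> \<le> (\<integral>\<^sup>+Q. ennreal (exp (- l * real k) * c) * ennreal (exp (l * real (length (Q v)))) + ennreal c \<partial>measure_pmf (dissem N E k L t))"
  proof (rule nn_integral_mono)
    fix Q
    have "(\<integral>\<^sup>+Q'. ennreal (exp (l * real (length (Q' v)))) \<partial>measure_pmf (dissem_step N E k Q))
        \<le> ennreal (exp (l * real (length (Q v) - k)) * c)"
      using step_mgf[OF G v l] by (simp add: c_def)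
    also have "\<dots> \<le> ennreal ((exp (l * real (length (Q v))) * exp (- l * real k) + 1) * c)"
      by (intro ennreal_leI mult_right_mono exp_sub_nat) (simp add: c_def)
    also have "\<dots> = ennreal (exp (- l * real k) * c) * ennreal (exp (l * real (length (Q v)))) + ennreal c"
      by (simp add: c_def ennreal_mult[symmetric] ennreal_plus[symmetric] algebra_simps del: ennreal_plus)
    finally show "(\<integral>\<^sup>+Q'. ennreal (exp (l * real (length (Q' v)))) \<partial>measure_pmf (dissem_step N E k Q))
        \<le> ennreal (exp (- l * real k) * c) * ennreal (exp (l * real (length (Q v)))) + ennreal c" .
  qed
  also have "\<dots> = ennreal \<rho> * ?a + ennreal c"
    using \<rho>c by (subst nn_integral_add) (auto simp: nn_integral_cmult)
  also have "\<dots> \<le> ennreal \<rho> * ennreal ?X + ennreal c"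
    using Suc.IH by (intro add_right_mono mult_left_mono) (simp_all add: \<rho>_def)
  also have "\<dots> = ennreal (\<rho> * ?X + c)"
    using \<rho>1 X0 by (simp add: ennreal_mult[symmetric] ennreal_plus[symmetric] c_def del: ennreal_plus)
  also have "\<rho> * ?X + c \<le> (1 + real (Suc t)) * \<rho> ^ (Suc t + 1) * exp (l * real k)"
  proof -
    have "\<rho> \<le> \<rho> ^ (Suc t + 1)" using \<rho>1
      by (metis One_nat_def Suc_eq_plus1 le_add2 power_increasing power_one_right)
    then have "c \<le> \<rho> ^ (Suc t + 1) * exp (l * real k)" unfolding c\<rho> by (intro mult_right_mono) auto
    then show ?thesis by (simp add: algebra_simps)
  qed
  finally show ?case by (simp add: \<rho>_def ennreal_leI)
qed

lemma markov_dissem: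
  assumes G: "simple_graph N E" and v: "v \<in> agents N" and l: "0 \<le> l"
  shows "measure_pmf.prob (dissem N E k L t) {Q. b < length (Q v)}
     \<le> (1 + real t) * exp ((exp l - 1 - l) * real k) ^ (t + 1) * exp (l * real k) / exp (l * (real b + 1))"
proof -
  let ?S = "{Q. b < length (Q v)}"
  let ?M = "measure_pmf (dissem N E k L t)"
  let ?X = "(1 + real t) * exp ((exp l - 1 - l) * real k) ^ (t + 1) * exp (l * real k)"
  have "(\<integral>\<^sup>+Q. ennreal (exp (l * (real b + 1))) * indicator ?S Q \<partial>?M)
      \<le> (\<integral>\<^sup>+Q. ennreal (exp (l * real (length (Q v)))) \<partial>?M)"
  proof (rule nn_integral_mono)
    fix Q
    show "ennreal (exp (l * (real b + 1))) * indicator ?S Q \<le> ennreal (exp (l * real (length (Q v))))"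
      using l by (auto simp: indicator_def intro!: ennreal_leI mult_left_mono)
  qed
  also have "\<dots> \<le> ennreal ?X" by (rule mgf_dissem[OF G v l])
  finally have "ennreal (exp (l * (real b + 1))) * emeasure ?M ?S \<le> ennreal ?X"
    by (simp add: nn_integral_cmult_indicator)
  then have "ennreal (exp (l * (real b + 1)) * measure ?M ?S) \<le> ennreal ?X"
    by (simp add: measure_pmf.emeasure_eq_measure ennreal_mult)
  then have "exp (l * (real b + 1)) * measure ?M ?S \<le> ?X"
    by (subst (asm) ennreal_le_iff) auto
  then show ?thesis by (simp add: field_simps)
qed


definition bnd :: "nat \<Rightarrow> nat \<Rightarrow> nat \<Rightarrow> nat \<Rightarrow> dstate \<Rightarrow> bool" where
  "bnd N k B m Q \<longleftrightarrow> (\<forall>v\<in>agents N. \<forall>p<length (Q v). p div k + 1 + B * (Q v ! p - 1) \<le> m)"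

lemma bnd_mono: "bnd N k B m Q \<Longrightarrow> m \<le> m' \<Longrightarrow> bnd N k B m' Q"
  unfolding bnd_def by force

lemma bnd_zero: "bnd N k B 0 Q \<Longrightarrow> v \<in> agents N \<Longrightarrow> Q v = []"
proof (rule ccontr)
  assume b: "bnd N k B 0 Q" and v: "v \<in> agents N" and ne: "Q v \<noteq> []"
  then have "0 < length (Q v)" by simp
  with b v have "0 div k + 1 + B * (Q v ! 0 - 1) \<le> 0" unfolding bnd_def by (metis (no_types, lifting) bot_nat_0.extremum_uniqueI)
  then show False by simp
qed

lemma filter_rep: "filter ((<) 0) (replicate k (L::nat)) = (if 0 < L then replicate k L else [])"
  by (induct k) auto

lemma bnd_init: "0 < k \<Longrightarrow> 1 \<le> B \<Longrightarrow> bnd N k B (B * L) (dissem_init N k L)"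
  unfolding bnd_def dissem_init_def
proof (intro ballI allI impI)
  fix v p assume k: "0 < k" and B: "1 \<le> B" and v: "v \<in> agents N"
    and p: "p < length (if v \<in> agents N then filter ((<) 0) (replicate k L) else [])"
  then have L: "0 < L" and pk: "p < k" by (auto simp: filter_rep split: if_splits)
  then have "(if v \<in> agents N then filter ((<) 0) (replicate k L) else []) ! p = L"
    using v L pk by (simp add: filter_rep)
  moreover have "1 + B * (L - 1) \<le> B * L" using L B
    by (metis Suc_pred' add.commute le_add2 mult_Suc_right nat_add_left_cancel_le One_nat_def plus_1_eq_Suc)
  ultimately show "p div k + 1 + B * ((if v \<in> agents N then filter ((<) 0) (replicate k L) else []) ! p - 1) \<le> B * L"
    using pk by simp
qed

lemma mem_compr0: "x \<in> set [f j. j \<leftarrow> xs, P j] \<Longrightarrow> \<exists>j\<in>set xs. P j \<and> x = f j"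
  by (induct xs) (auto split: if_splits)

lemma mem_concat_map0: "x \<in> set (concat (map F xs)) \<Longrightarrow> \<exists>i\<in>set xs. x \<in> set (F i)"
  by auto

lemma bnd_step:
  assumes k: "0 < k" and b: "bnd N k B (Suc m) Q"
    and len: "\<forall>v\<in>agents N. length (dissem_update N k Q d v) \<le> B * k"
  shows "bnd N k B m (dissem_update N k Q d)"
  unfolding bnd_def
proof (intro ballI allI impI)
  fix v p assume v: "v \<in> agents N" and p: "p < length (dissem_update N k Q d v)"
  define R where "R = concat (map (\<lambda>i. [take k (Q i) ! j - 1. j \<leftarrow> [0..<length (take k (Q i))],
                                d (i, j) = v \<and> 1 < take k (Q i) ! j]) [1..<Suc N])"
  have U: "dissem_update N k Q d v = drop k (Q v) @ R"
    using v by (simp add: dissem_update_def R_def)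
  show "p div k + 1 + B * (dissem_update N k Q d v ! p - 1) \<le> m"
  proof (cases "p < length (drop k (Q v))")
    case True
    then have e: "dissem_update N k Q d v ! p = Q v ! (k + p)" by (simp add: U nth_append)
    have "(k + p) div k + 1 + B * (Q v ! (k + p) - 1) \<le> Suc m"
      using b v True unfolding bnd_def by auto
    moreover have "(k + p) div k = Suc (p div k)" using k by simp
    ultimately show ?thesis using e by simp
  next
    case False
    then have "dissem_update N k Q d v ! p \<in> set R"
      using p by (simp add: U nth_append)
    from mem_concat_map0[OF this[unfolded R_def]] obtain i where i0: "i \<in> set [1..<Suc N]" and
      m0: "dissem_update N k Q d v ! p \<in> set [take k (Q i) ! j - 1. j \<leftarrow> [0..<length (take k (Q i))],
                                d (i, j) = v \<and> 1 < take k (Q i) ! j]"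
      by blast
    from mem_compr0[OF m0] obtain j where j0: "j \<in> set [0..<length (take k (Q i))]" and
      r1: "1 < take k (Q i) ! j" and e: "dissem_update N k Q d v ! p = take k (Q i) ! j - 1"
      by blast
    have i: "i \<in> agents N" using i0 by (auto simp: agents_def)
    have j: "j < length (take k (Q i))" using j0 by simp
    have jk: "j < k" "j < length (Q i)" using j by auto
    have tk: "take k (Q i) ! j = Q i ! j" using jk by simp
    have "\<forall>p<length (Q i). p div k + 1 + B * (Q i ! p - 1) \<le> Suc m"
      using b i unfolding bnd_def by blast
    then have "j div k + 1 + B * (Q i ! j - 1) \<le> Suc m" using jk(2) by blast
    then have m1: "B * (Q i ! j - 1) \<le> m" using jk by simp
    have "p < B * k" using p len v by auto
    then have "p div k < B" using k by (simp add: div_less_iff_less_mult)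
    then have "p div k + 1 \<le> B" by simp
    moreover have "B * (Q i ! j - 1) = B + B * (Q i ! j - 1 - 1)" using r1 tk
      by (metis Suc_diff_Suc diff_Suc_1 mult_Suc_right)
    ultimately show ?thesis using e tk m1 by simp
  qed
qed

lemma mem_compr: "x \<in> set [f j. j \<leftarrow> xs, P j] \<Longrightarrow> \<exists>j\<in>set xs. P j \<and> x = f j"
  by (induct xs) (auto split: if_splits)

lemma mem_concat_map: "x \<in> set (concat (map F xs)) \<Longrightarrow> \<exists>i\<in>set xs. x \<in> set (F i)"
  by auto

definition astep :: "nat \<Rightarrow> (nat \<Rightarrow> nat \<Rightarrow> bool) \<Rightarrow> nat \<Rightarrow> nat \<Rightarrow> dstate \<times> bool \<Rightarrow> (dstate \<times> bool) pmf" where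
  "astep N E k B x = map_pmf (\<lambda>Q'. (Q', snd x \<or> (\<exists>v\<in>agents N. B * k < length (Q' v)))) (dissem_step N E k (fst x))"

fun aug :: "nat \<Rightarrow> (nat \<Rightarrow> nat \<Rightarrow> bool) \<Rightarrow> nat \<Rightarrow> nat \<Rightarrow> nat \<Rightarrow> nat \<Rightarrow> (dstate \<times> bool) pmf" where
  "aug N E k L B 0 = return_pmf (dissem_init N k L, False)"
| "aug N E k L B (Suc t) = bind_pmf (aug N E k L B t) (astep N E k B)"

lemma aug_fst: "map_pmf fst (aug N E k L B t) = dissem N E k L t"
proof (induction t)
  case (Suc t)
  have "map_pmf fst (aug N E k L B (Suc t)) = bind_pmf (aug N E k L B t) (\<lambda>x. dissem_step N E k (fst x))"
    by (simp add: map_bind_pmf astep_def pmf.map_comp o_def)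
  also have "\<dots> = bind_pmf (map_pmf fst (aug N E k L B t)) (dissem_step N E k)"
    by (simp add: bind_map_pmf)
  finally show ?case using Suc by simp
qed simp

lemma aug_inv:
  assumes k: "0 < k" and B: "1 \<le> B"
  shows "x \<in> set_pmf (aug N E k L B t) \<Longrightarrow> \<not> snd x \<Longrightarrow> bnd N k B (B * L - t) (fst x)"
proof (induction t arbitrary: x)
  case 0
  then show ?case using bnd_init[OF k B] by simp
next
  case (Suc t)
  from Suc.prems obtain y Q' where y: "y \<in> set_pmf (aug N E k L B t)"
    and Q': "Q' \<in> set_pmf (dissem_step N E k (fst y))"
    and x: "x = (Q', snd y \<or> (\<exists>v\<in>agents N. B * k < length (Q' v)))"
    by (auto simp: astep_def)
  from Q' obtain d where Qd: "Q' = dissem_update N k (fst y) d" by (auto simp: dissem_step_def)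
  have ny: "\<not> snd y" and lenb: "\<forall>v\<in>agents N. length (Q' v) \<le> B * k"
    using Suc.prems(2) x by auto
  have "bnd N k B (B * L - t) (fst y)" using Suc.IH[OF y ny] .
  then have "bnd N k B (Suc (B * L - Suc t)) (fst y)" by (rule bnd_mono) simp
  from bnd_step[OF k this, of d] lenb Qd have "bnd N k B (B * L - Suc t) Q'" by simp
  then show ?case using x by simp
qed

lemma aug_bad_step:
  "measure_pmf.prob (aug N E k L B (Suc t)) {x. snd x}
     \<le> measure_pmf.prob (aug N E k L B t) {x. snd x}
       + measure_pmf.prob (dissem N E k L (Suc t)) {Q. \<exists>v\<in>agents N. B * k < length (Q v)}"
proof -
  let ?S = "{x :: dstate \<times> bool. snd x}"
  let ?Bad = "{Q. \<exists>v\<in>agents N. B * k < length (Q v)}"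
  let ?A = "aug N E k L B t"
  have "emeasure (measure_pmf (aug N E k L B (Suc t))) ?S
      = (\<integral>\<^sup>+y. emeasure (measure_pmf (astep N E k B y)) ?S \<partial>measure_pmf ?A)" by simp
  also have "\<dots> \<le> (\<integral>\<^sup>+y. indicator ?S y + emeasure (measure_pmf (dissem_step N E k (fst y))) ?Bad \<partial>measure_pmf ?A)"
  proof (rule nn_integral_mono)
    fix y :: "dstate \<times> bool"
    show "emeasure (measure_pmf (astep N E k B y)) ?S \<le> indicator ?S y + emeasure (measure_pmf (dissem_step N E k (fst y))) ?Bad"
    proof (cases "snd y")
      case True
      have "emeasure (measure_pmf (astep N E k B y)) ?S \<le> 1" by (rule measure_pmf.emeasure_le_1)
      then show ?thesis using True by (simp add: add_increasing2)
    next
      case False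
      have "emeasure (measure_pmf (astep N E k B y)) ?S = emeasure (measure_pmf (dissem_step N E k (fst y))) ?Bad"
        using False by (simp add: astep_def vimage_def)
      then show ?thesis by simp
    qed
  qed
  also have "\<dots> = emeasure (measure_pmf ?A) ?S + (\<integral>\<^sup>+y. emeasure (measure_pmf (dissem_step N E k (fst y))) ?Bad \<partial>measure_pmf ?A)"
    by (subst nn_integral_add) auto
  also have "(\<integral>\<^sup>+y. emeasure (measure_pmf (dissem_step N E k (fst y))) ?Bad \<partial>measure_pmf ?A)
      = emeasure (measure_pmf (bind_pmf (map_pmf fst ?A) (dissem_step N E k))) ?Bad"
    by (simp add: bind_map_pmf)
  also have "\<dots> = emeasure (measure_pmf (dissem N E k L (Suc t))) ?Bad"
    by (simp add: aug_fst)
  finally show ?thesis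
    by (simp add: measure_pmf.emeasure_eq_measure ennreal_plus[symmetric] del: ennreal_plus)
qed

lemma aug_bad:
  "measure_pmf.prob (aug N E k L B t) {x. snd x}
     \<le> (\<Sum>s\<in>{1..t}. measure_pmf.prob (dissem N E k L s) {Q. \<exists>v\<in>agents N. B * k < length (Q v)})"
proof (induction t)
  case (Suc t)
  then show ?case using aug_bad_step[of N E k L B t] by simp
qed simp

lemma bad_union:
  "measure_pmf.prob M {Q. \<exists>v\<in>agents N. b < length (Q v)}
     \<le> (\<Sum>v\<in>agents N. measure_pmf.prob M {Q. b < length (Q v)})"
proof -
  have eq: "{Q. \<exists>v\<in>agents N. b < length (Q v)} = (\<Union>v\<in>agents N. {Q. b < length (Q v)})" by auto
  show ?thesis unfolding eq
    by (rule measure_pmf.finite_measure_subadditive_finite) auto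
qed

lemma done_prob:
  assumes k: "0 < k" and B: "1 \<le> B" and T: "B * L \<le> T"
  shows "1 - measure_pmf.prob (aug N E k L B T) {x. snd x}
       \<le> measure_pmf.prob (dissem N E k L T) (all_walks_done N)"
proof -
  let ?A = "aug N E k L B T"
  have "measure_pmf.prob (dissem N E k L T) (all_walks_done N)
      = measure_pmf.prob (map_pmf fst ?A) (all_walks_done N)"
    by (simp only: aug_fst)
  also have "\<dots> = measure_pmf.prob ?A (fst -` all_walks_done N)"
    by (rule measure_map_pmf)
  also have "measure_pmf.prob ?A {x. \<not> snd x} \<le> \<dots>"
  proof (rule measure_pmf.finite_measure_mono_AE)
    show "AE x in measure_pmf ?A. x \<in> {x. \<not> snd x} \<longrightarrow> x \<in> fst -` all_walks_done N"
    proof (rule AE_pmfI, intro impI)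
      fix x assume x: "x \<in> set_pmf ?A" and "x \<in> {x. \<not> snd x}"
      then have "bnd N k B (B * L - T) (fst x)" using aug_inv[OF k B x] by simp
      then have "bnd N k B 0 (fst x)" using T by simp
      then show "x \<in> fst -` all_walks_done N"
        by (auto simp: all_walks_done_def dest: bnd_zero)
    qed
  qed simp
  moreover have "measure_pmf.prob ?A {x. \<not> snd x} = 1 - measure_pmf.prob ?A {x. snd x}"
  proof -
    have "{x. \<not> snd x} = space (measure_pmf ?A) - {x. snd x}" by auto
    then show ?thesis using measure_pmf.prob_compl[of "{x. snd x}" ?A] by simp
  qed
  ultimately show ?thesis by simp
qed


lemma ln2_ge: "1/2 \<le> ln (2::real)"
proof -
  have "exp (1/2::real) \<le> 1 + 1/2 + (1/2)^2" by (rule exp_bound) auto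
  also have "\<dots> \<le> 2" by (simp add: power2_eq_square)
  finally have "exp (1/2::real) \<le> 2" .
  then have "ln (exp (1/2::real)) \<le> ln 2" by (subst ln_le_cancel_iff) auto
  then show ?thesis by simp
qed

lemma arith_BL:
  fixes c a M C l lam T B L :: real
  assumes c: "0 < c" and a: "a = 4 * c + 4" and l: "1/2 \<le> l" and M: "1 \<le> M"
    and C: "C = a^2 * M" and T: "C * l^2 \<le> T" and lam: "lam = 1 / (a * l)"
    and B: "B \<le> 2 * lam * (T + 1) + 2" and B0: "0 \<le> B" and L: "L \<le> c * l" and L0: "0 \<le> L"
  shows "B * L \<le> T"
proof -
  have a0: "0 < a" using a c by simp
  have "4 * (1/2) \<le> a * l" using a l c by (intro mult_mono) auto
  then have al: "2 \<le> a * l" by simp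
  have laml: "lam * l = 1 / a" using lam l a0 by (simp add: field_simps)
  have s1: "B * L \<le> (2 * lam * (T + 1) + 2) * (c * l)"
    using B B0 L L0 by (intro mult_mono) auto
  have s2': "(2 * lam * (T + 1) + 2) * (c * l) = 2 * c * (T + 1) * (lam * l) + 2 * c * l"
    by (simp add: algebra_simps)
  have s2: "(2 * lam * (T + 1) + 2) * (c * l) = 2 * c * (T + 1) / a + 2 * c * l"
    unfolding s2' laml by simp
  have C1: "a^2 \<le> C" using C M a0 by (simp add: mult_le_cancel_left1)
  have Cl: "a^2 * l^2 \<le> C * l^2" using C1 by (intro mult_right_mono) auto
  have T0: "0 \<le> T" using Cl T by (meson order_trans zero_le_power2 mult_nonneg_nonneg)
  have ca: "2 * c / a \<le> 1/2" using a c by (simp add: pos_divide_le_eq)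
  have t1: "2 * c * (T + 1) / a \<le> (T + 1) / 2"
  proof -
    have "2 * c * (T + 1) / a = (2 * c / a) * (T + 1)" by simp
    also have "\<dots> \<le> (1/2) * (T + 1)" using ca T0 by (intro mult_right_mono) auto
    finally show ?thesis by simp
  qed
  have sq: "(a * l) * (a * l) \<ge> 2 * (a * l)" using al by (intro mult_right_mono) auto
  have e2: "2 * (a * l) = 8 * c * l + 8 * l" using a by (simp add: algebra_simps)
  have e3: "a^2 * l^2 = (a * l) * (a * l)" by (simp add: power2_eq_square)
  have t2: "1 + 4 * c * l \<le> T"
  proof -
    have "0 \<le> c * l" using c l by simp
    then have "1 + 4 * c * l \<le> 8 * c * l + 8 * l" using l by linarith
    then show ?thesis using sq e2 e3 Cl T by linarith
  qed
  have "B * L \<le> 2 * c * (T + 1) / a + 2 * c * l" using s1 s2 by simp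
  also have "\<dots> \<le> (T + 1) / 2 + 2 * c * l" using t1 by simp
  also have "\<dots> \<le> T"
  proof -
    have "4 * c * l = 2 * (2 * c * l)" by simp
    then show ?thesis using t2 by (simp add: field_simps)
  qed
  finally show ?thesis .
qed

lemma arith_const:
  fixes h a M C :: real
  assumes h: "16 \<le> h" and M: "M = 4 * ln (a^2 + 2) + 5 + h" and C: "C = a^2 * M"
  shows "4 * ln (C + 2) \<le> h * M - 5 - h / 3" and "1 \<le> M"
proof -
  have lnp: "0 \<le> ln (a^2 + 2)" by simp
  show M1: "1 \<le> M" using M h lnp by linarith
  have "C + 2 \<le> (a^2 + 2) * M" using C M1 by (simp add: algebra_simps)
  then have "ln (C + 2) \<le> ln ((a^2 + 2) * M)"
  proof -
    have "0 < a^2 + 2" using zero_le_power2[of a] by linarith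
    then have "0 < (a^2 + 2) * M" using M1 by simp
    moreover have "0 < C + 2" using C M1 zero_le_power2[of a] by (simp add: add_nonneg_pos)
    ultimately show ?thesis using \<open>C + 2 \<le> (a^2 + 2) * M\<close> by simp
  qed
  also have "\<dots> = ln (a^2 + 2) + ln M" using M1 zero_le_power2[of a] by (intro ln_mult_pos) linarith+
  also have "ln M \<le> M - 1" using M1 by (intro ln_le_minus_one) auto
  finally have "ln (C + 2) \<le> ln (a^2 + 2) + M - 1" by simp
  moreover have "5 * M \<le> h * M" using h M1 by (intro mult_right_mono) auto
  ultimately show "4 * ln (C + 2) \<le> h * M - 5 - h / 3" using M h lnp by linarith
qed

lemma arith_fail:
  fixes h c a M C l k lam B :: real and n T :: nat
  assumes h: "16 \<le> h" and c: "0 < c" and a: "a = 4 * c + 4"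
    and M: "M = 4 * ln (a^2 + 2) + 5 + h" and C: "C = a^2 * M"
    and n: "2 \<le> n" and l: "l = ln (real n)"
    and k: "h * l \<le> k"
    and T1: "C * l^2 \<le> real T" and T2: "real T \<le> C * l^2 + 1"
    and lam: "lam = 1 / (a * l)" and B: "2 * lam * (real T + 1) \<le> B - 1"
  shows "real T * real n * ((1 + real T) * exp ((exp lam - 1 - lam) * k) ^ (T + 1) * exp (lam * k)
            / exp (lam * (B * k + 1))) \<le> 1 / real n powr (h / 3)"
proof -
  have "ln 2 \<le> ln (real n)" using n by (subst ln_le_cancel_iff) auto
  then have l2: "1/2 \<le> l" using ln2_ge l by linarith
  have a0: "4 \<le> a" using a c by simp
  have "4 * (1/2) \<le> a * l" using a0 l2 by (intro mult_mono) auto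
  then have al: "2 \<le> a * l" by simp
  have lam0: "0 < lam" using lam al by simp
  have lam1: "lam \<le> 1" using lam al by (simp add: divide_le_eq)
  obtain M1: "1 \<le> M" and cst: "4 * ln (C + 2) \<le> h * M - 5 - h / 3"
    using arith_const[OF h M C] by blast
  have "0 \<le> h * l" using h l2 by simp
  then have k0: "0 \<le> k" using k by linarith
  have e1: "exp lam - 1 - lam \<le> lam^2" using exp_bound[of lam] lam0 lam1 by simp
  have r1: "exp ((exp lam - 1 - lam) * k) ^ (T + 1) \<le> exp (lam^2 * k * (real T + 1))"
  proof -
    have "exp ((exp lam - 1 - lam) * k) ^ (T + 1) = exp (real (T + 1) * ((exp lam - 1 - lam) * k))"
      by (rule exp_of_nat_mult[symmetric])
    also have "\<dots> \<le> exp (lam^2 * k * (real T + 1))"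
    proof -
      have "(exp lam - 1 - lam) * k \<le> lam^2 * k" by (rule mult_right_mono[OF e1 k0])
      then have "real (T + 1) * ((exp lam - 1 - lam) * k) \<le> real (T + 1) * (lam^2 * k)"
        by (intro mult_left_mono) auto
      also have "\<dots> = lam^2 * k * (real T + 1)" by (simp add: algebra_simps)
      finally show ?thesis by simp
    qed
    finally show ?thesis .
  qed
  have r2: "exp (lam * k) / exp (lam * (B * k + 1)) \<le> exp (- (lam * k * (B - 1)))"
  proof -
    have "exp (lam * k) / exp (lam * (B * k + 1)) = exp (- (lam * k * (B - 1)) - lam)"
      by (simp add: exp_diff[symmetric] algebra_simps)
    also have "\<dots> \<le> exp (- (lam * k * (B - 1)))" using lam0 by simp
    finally show ?thesis .
  qed
  have r3: "lam * k * (B - 1) \<ge> 2 * (lam^2 * k * (real T + 1))"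
  proof -
    have "lam * k * (B - 1) \<ge> lam * k * (2 * lam * (real T + 1))"
      using B lam0 k0 by (intro mult_left_mono) auto
    then show ?thesis by (simp add: power2_eq_square algebra_simps)
  qed
  have r4: "h * M * l \<le> lam^2 * k * (real T + 1)"
  proof -
    have "lam^2 * k * (real T + 1) \<ge> lam^2 * (h * l) * (C * l^2)"
      using k T1 k0 h l2 C M1 by (intro mult_mono) (auto intro: mult_nonneg_nonneg)
    also have "lam^2 * (h * l) * (C * l^2) = h * M * l"
    proof -
      have "a * l \<noteq> 0" using al by linarith
      then have u: "lam * (a * l) = 1" using lam by simp
      have "lam^2 * (h * l) * (C * l^2) = h * M * l * (lam * (a * l))^2"
        by (simp add: C power2_eq_square algebra_simps)
      then show ?thesis using u by simp
    qed
    finally show ?thesis .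
  qed
  define X where "X = (1 + real T) * exp ((exp lam - 1 - lam) * k) ^ (T + 1) * exp (lam * k) / exp (lam * (B * k + 1))"
  have X: "X \<le> (1 + real T) * exp (- (h * M * l))"
  proof -
    have "X = (1 + real T) * (exp ((exp lam - 1 - lam) * k) ^ (T + 1)) * (exp (lam * k) / exp (lam * (B * k + 1)))"
      by (simp add: X_def)
    also have "\<dots> \<le> (1 + real T) * exp (lam^2 * k * (real T + 1)) * exp (- (lam * k * (B - 1)))"
      using r1 r2 by (intro mult_mono) auto
    also have "\<dots> = (1 + real T) * exp (lam^2 * k * (real T + 1) - lam * k * (B - 1))"
      by (simp add: exp_diff exp_minus divide_inverse)
    also have "\<dots> \<le> (1 + real T) * exp (- (h * M * l))"
      using r3 r4 by (intro mult_left_mono) auto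
    finally show ?thesis .
  qed
  have n0: "0 < real n" using n by simp
  have nl: "real n = exp l" using n0 l by simp
  have Tp: "real T + 1 \<le> (C + 2) * (real n)^2"
  proof -
    have C0: "0 \<le> C" using C M1 by simp
    have "l + 1 \<le> exp l" using exp_ge_add_one_self[of l] by linarith
    then have "(l + 1)^2 \<le> (real n)^2" using nl l2 by (intro power_mono) auto
    moreover have "real T + 1 \<le> (C + 2) * (l + 1)^2"
    proof -
      have "C * l^2 \<le> C * (l + 1)^2" using C0 l2 by (intro mult_left_mono power_mono) auto
      moreover have "2 \<le> 2 * (l + 1)^2"
      proof -
        have "1 * 1 \<le> (l + 1) * (l + 1)" using l2 by (intro mult_mono) auto
        then show ?thesis by (simp add: power2_eq_square)
      qed
      ultimately show ?thesis using T2 by (simp add: algebra_simps)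
    qed
    moreover have "(C + 2) * (l + 1)^2 \<le> (C + 2) * (real n)^2"
      using C0 \<open>(l + 1)^2 \<le> (real n)^2\<close> by (intro mult_left_mono) auto
    ultimately show ?thesis by linarith
  qed
  have "real T * real n * X \<le> real n * (real T + 1)^2 * exp (- (h * M * l))"
  proof -
    have X0: "0 \<le> X" unfolding X_def by simp
    have "real T * real n * X \<le> (real T + 1) * real n * X" using X0 by (intro mult_right_mono) auto
    also have "\<dots> \<le> (real T + 1) * real n * ((1 + real T) * exp (- (h * M * l)))"
      using X by (intro mult_left_mono) auto
    finally show ?thesis by (simp add: power2_eq_square algebra_simps)
  qed
  also have "\<dots> \<le> real n * ((C + 2) * (real n)^2)^2 * exp (- (h * M * l))"
    using Tp by (intro mult_right_mono mult_left_mono power_mono) auto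
  also have "\<dots> = (C + 2)^2 * exp (5 * l - h * M * l)"
  proof -
    have n5: "real n ^ 5 = exp (5 * l)" using nl exp_of_nat_mult[of 5 l] by simp
    have ee: "exp (5 * l - h * M * l) = exp (5 * l) * exp (- (h * M * l))"
      by (simp add: exp_diff exp_minus divide_inverse)
    have "real n * ((C + 2) * (real n)^2)^2 = (C + 2)^2 * real n ^ 5"
      by (simp add: eval_nat_numeral power2_eq_square mult_ac)
    then show ?thesis unfolding ee n5 by (simp add: mult_ac)
  qed
  also have "\<dots> \<le> exp (- (h / 3 * l))"
  proof -
    have C2: "0 < C + 2" using C M1 zero_le_power2[of a] by (simp add: add_nonneg_pos)
    have "(C + 2)^2 = exp (2 * ln (C + 2))" using C2 exp_of_nat_mult[of 2 "ln (C + 2)"] by simp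
    moreover have "2 * ln (C + 2) \<le> (h * M - 5 - h / 3) * l"
    proof -
      have "0 \<le> C" using C M1 by simp
      then have "0 \<le> ln (C + 2)" by simp
      then have "0 \<le> h * M - 5 - h / 3" using cst by linarith
      then have "(h * M - 5 - h / 3) * (1/2) \<le> (h * M - 5 - h / 3) * l"
        using l2 by (intro mult_left_mono) auto
      then show ?thesis using cst by simp
    qed
    ultimately have "(C + 2)^2 \<le> exp ((h * M - 5 - h / 3) * l)" by simp
    then have "(C + 2)^2 * exp (5 * l - h * M * l) \<le> exp ((h * M - 5 - h / 3) * l) * exp (5 * l - h * M * l)"
      by (intro mult_right_mono) auto
    also have "\<dots> = exp (- (h / 3 * l))"
    proof -
      have eq: "(h * M - 5 - h / 3) * l + (5 * l - h * M * l) = - (h / 3 * l)"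
        by (simp add: algebra_simps)
      show ?thesis by (subst exp_add[symmetric]) (simp only: eq)
    qed
    finally show ?thesis .
  qed
  also have "\<dots> = 1 / real n powr (h / 3)"
  proof -
    have "real n powr (h / 3) = exp (h / 3 * l)" using n0 l by (simp add: powr_def)
    then show ?thesis by (simp add: exp_minus inverse_eq_divide)
  qed
  finally show ?thesis unfolding X_def .
qed


lemma N_ge2:
  assumes G: "simple_graph N E" and nb: "\<not> bipartite_graph N E"
  shows "2 \<le> N"
proof (rule ccontr)
  assume N: "\<not> 2 \<le> N"
  have "bipartite_graph N E" unfolding bipartite_graph_def
  proof (intro exI[of _ "\<lambda>_. True"] ballI impI)
    fix u v assume u: "u \<in> agents N" and v: "v \<in> agents N" and e: "E u v"
    have "u = v" using u v N unfolding agents_def atLeastAtMost_iff by linarith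
    then show "True \<noteq> True" using G e unfolding simple_graph_def by blast
  qed
  then show False using nb by simp
qed

lemma Y_mono:
  fixes lam k' E1 E2 :: real
  assumes "0 \<le> lam" "s \<le> T" and that: "0 \<le> k'" "0 \<le> E1" "0 < E2"
  shows "(1 + real s) * exp ((exp lam - 1 - lam) * k') ^ (s + 1) * E1 / E2
       \<le> (1 + real T) * exp ((exp lam - 1 - lam) * k') ^ (T + 1) * E1 / E2"
proof -
  have r1: "1 \<le> exp ((exp lam - 1 - lam) * k')"
  proof -
    have "0 \<le> (exp lam - 1 - lam) * k'" using exp_ge_add_one_self[of lam] that
      by (intro mult_nonneg_nonneg) (linarith, simp)
    then show ?thesis by simp
  qed
  have "exp ((exp lam - 1 - lam) * k') ^ (s + 1) \<le> exp ((exp lam - 1 - lam) * k') ^ (T + 1)"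
    using r1 assms by (intro power_increasing) auto
  moreover have "(1 + real s) \<le> (1 + real T)" using assms by simp
  ultimately have "(1 + real s) * exp ((exp lam - 1 - lam) * k') ^ (s + 1)
      \<le> (1 + real T) * exp ((exp lam - 1 - lam) * k') ^ (T + 1)"
    by (intro mult_mono) auto
  then have "(1 + real s) * exp ((exp lam - 1 - lam) * k') ^ (s + 1) * E1
      \<le> (1 + real T) * exp ((exp lam - 1 - lam) * k') ^ (T + 1) * E1"
    using that(2) by (rule mult_right_mono)
  then show ?thesis using that(3) by (rule divide_right_mono[OF _ less_imp_le])
qed

theorem lemma1:
  fixes g :: "nat \<Rightarrow> real" and \<beta> \<sigma> h c\<^sub>L :: real
  assumes g_growth: "\<forall>l>0. eventually (\<lambda>N. l * ln (real N) < g N \<and> g N < l * real N) sequentially"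
    and beta: "1/2 < \<beta>" "\<beta> < 1"
    and sigma: "11 \<le> \<sigma>"
    and h_def: "h = 16 * \<sigma> / (1 - \<beta>)"
    and cL: "0 < c\<^sub>L"
  shows "\<exists>C>0. \<forall>N E L.
           simple_graph N E \<and> connected_graph N E \<and> \<not> bipartite_graph N E \<and>
           ln (real N) < g N \<and>
           nearly_uniform_length N E L \<and> real L \<le> c\<^sub>L * ln (real N)
           \<longrightarrow> measure_pmf.prob (dissem N E (nat \<lceil>h * g N\<rceil>) L (nat \<lceil>C * (ln (real N))^2\<rceil>))
                 (all_walks_done N)
               \<ge> 1 - 1 / real N powr (h / 3)"
proof -
  have h16: "16 \<le> h"
  proof -
    have "16 * \<sigma> \<le> 16 * \<sigma> / (1 - \<beta>)" using beta sigma by (simp add: le_divide_eq)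
    then show ?thesis using h_def sigma by linarith
  qed
  define a where "a = 4 * c\<^sub>L + 4"
  define M where "M = 4 * ln (a^2 + 2) + 5 + h"
  define C where "C = a^2 * M"
  obtain M1: "1 \<le> M" using arith_const[OF h16 M_def C_def] by blast
  have a0: "4 \<le> a" using cL a_def by simp
  have C0: "0 < C" unfolding C_def using M1 a0 by simp
  show ?thesis
  proof (intro exI[of _ C] conjI allI impI C0)
    fix N E L
    assume H: "simple_graph N E \<and> connected_graph N E \<and> \<not> bipartite_graph N E \<and>
           ln (real N) < g N \<and> nearly_uniform_length N E L \<and> real L \<le> c\<^sub>L * ln (real N)"
    then have G: "simple_graph N E" and nb: "\<not> bipartite_graph N E" and gN: "ln (real N) < g N"
      and Lb: "real L \<le> c\<^sub>L * ln (real N)" by auto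
    have N2: "2 \<le> N" by (rule N_ge2[OF G nb])
    define l where "l = ln (real N)"
    have "ln 2 \<le> ln (real N)" using N2 by (subst ln_le_cancel_iff) auto
    then have l2: "1/2 \<le> l" using ln2_ge l_def by linarith
    define k where "k = nat \<lceil>h * g N\<rceil>"
    have hg: "h * l \<le> h * g N" using gN h16 l_def by (intro mult_left_mono) auto
    have kr: "h * g N \<le> real k" unfolding k_def by linarith
    have kl: "h * l \<le> real k" using hg kr by linarith
    have "0 < h * l" using h16 l2 by simp
    then have k0: "0 < k" using kl by linarith
    define T where "T = nat \<lceil>C * l^2\<rceil>"
    have "0 \<le> C * l^2" using C0 by simp
    then have T1: "C * l^2 \<le> real T" and T2: "real T \<le> C * l^2 + 1" unfolding T_def by linarith+
    define lam where "lam = 1 / (a * l)"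
    have "4 * (1/2) \<le> a * l" using a0 l2 by (intro mult_mono) auto
    then have lam0: "0 \<le> lam" unfolding lam_def by simp
    define B where "B = nat \<lceil>2 * lam * (real T + 1)\<rceil> + 1"
    have "0 \<le> 2 * lam * (real T + 1)" using lam0 by simp
    then have Bl: "2 * lam * (real T + 1) \<le> real B - 1" and Bu: "real B \<le> 2 * lam * (real T + 1) + 2"
      unfolding B_def by linarith+
    have B1: "1 \<le> B" unfolding B_def by simp
    have "real B * real L \<le> real T"
      by (rule arith_BL[OF cL a_def l2 M1 C_def T1 lam_def Bu]) (use Lb l_def in auto)
    then have BL: "B * L \<le> T" by (simp only: of_nat_mult[symmetric] of_nat_le_iff)
    define Y where "Y = (1 + real T) * exp ((exp lam - 1 - lam) * real k) ^ (T + 1) * exp (lam * real k)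
            / exp (lam * (real (B * k) + 1))"
    let ?D = "\<lambda>s. dissem N E k L s"
    have "measure_pmf.prob (aug N E k L B T) {x. snd x}
        \<le> (\<Sum>s\<in>{1..T}. measure_pmf.prob (?D s) {Q. \<exists>v\<in>agents N. B * k < length (Q v)})"
      by (rule aug_bad)
    also have "\<dots> \<le> (\<Sum>s\<in>{1..T}. \<Sum>v\<in>agents N. Y)"
    proof (intro sum_mono)
      fix s assume s: "s \<in> {1..T}"
      have "measure_pmf.prob (?D s) {Q. \<exists>v\<in>agents N. B * k < length (Q v)}
          \<le> (\<Sum>v\<in>agents N. measure_pmf.prob (?D s) {Q. B * k < length (Q v)})"
        by (rule bad_union)
      also have "\<dots> \<le> (\<Sum>v\<in>agents N. Y)"
      proof (intro sum_mono)
        fix v assume v: "v \<in> agents N"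
        have "measure_pmf.prob (?D s) {Q. B * k < length (Q v)}
            \<le> (1 + real s) * exp ((exp lam - 1 - lam) * real k) ^ (s + 1) * exp (lam * real k)
               / exp (lam * (real (B * k) + 1))"
          by (rule markov_dissem[OF G v lam0])
        also have "\<dots> \<le> Y" unfolding Y_def
          by (rule Y_mono) (use lam0 s in auto)
        finally show "measure_pmf.prob (?D s) {Q. B * k < length (Q v)} \<le> Y" .
      qed
      finally show "measure_pmf.prob (?D s) {Q. \<exists>v\<in>agents N. B * k < length (Q v)} \<le> (\<Sum>v\<in>agents N. Y)" .
    qed
    also have "\<dots> = real T * real N * Y" by (simp add: agents_def)
    also have "\<dots> \<le> 1 / real N powr (h / 3)"
      unfolding Y_def of_nat_mult
      by (rule arith_fail[OF h16 cL a_def M_def C_def N2 l_def kl T1 T2 lam_def Bl])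
    finally have fail: "measure_pmf.prob (aug N E k L B T) {x. snd x} \<le> 1 / real N powr (h / 3)" .
    have "1 - measure_pmf.prob (aug N E k L B T) {x. snd x} \<le> measure_pmf.prob (?D T) (all_walks_done N)"
      by (rule done_prob[OF k0 B1 BL])
    then show "1 - 1 / real N powr (h / 3)
        \<le> measure_pmf.prob (dissem N E (nat \<lceil>h * g N\<rceil>) L (nat \<lceil>C * (ln (real N))^2\<rceil>)) (all_walks_done N)"
      using fail unfolding k_def T_def l_def by linarith
  qed
qed

end
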